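(* Let $H_0\in\mathbb{C}^{n\times n}$ be a Hermitian positive-semidefinite matrix. Then $H_0$ is isotropic, i.e. $H_0 H_0^T = 0_{n\times n}$, if and only if there exist a complex orthogonal matrix $R\in\mathbb{C}^{n\times n}$ ($R R^T = R^T R = \mathbb{I}_n$), an integer $m\ge 1$, and a matrix $O\in\mathbb{C}^{m\times n}$ with $O O^T = 0_{m\times m}$, such that $H_0 = R^\dagger O^\dagger O R$.
   Context: $^T$ denotes transpose (no conjugation), $^\dagger$ conjugate transpose, $\mathbb{I}_n$ the $n\times n$ identity. *)

theory Defs
  imports "Jordan_Normal_Form.Matrix"
begin

definition adj_mat :: "complex mat \<Rightarrow> complex mat" where
  "adj_mat A = transpose_mat (map_mat cnj A)"

definition hermitian_mat :: "complex mat \<Rightarrow> bool" where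
  "hermitian_mat A \<longleftrightarrow> adj_mat A = A"

definition psd_mat :: "nat \<Rightarrow> complex mat \<Rightarrow> bool" where
  "psd_mat n A \<longleftrightarrow> A \<in> carrier_mat n n \<and>
     (\<forall>v \<in> carrier_vec n. let q = (\<Sum>i<n. cnj (v $ i) * (A *\<^sub>v v) $ i)
                          in q \<in> \<real> \<and> 0 \<le> Re q)"

end

theory Submission
  imports Defs
begin

definition qf :: "nat \<Rightarrow> (nat \<Rightarrow> nat \<Rightarrow> complex) \<Rightarrow> (nat \<Rightarrow> complex) \<Rightarrow> complex" where
  "qf n f v = (\<Sum>i<n. \<Sum>j<n. cnj (v i) * f i j * v j)"

definition hermf :: "nat \<Rightarrow> (nat \<Rightarrow> nat \<Rightarrow> complex) \<Rightarrow> bool" where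
  "hermf n f \<longleftrightarrow> (\<forall>i<n. \<forall>j<n. f j i = cnj (f i j))"

lemma sum_if_const: "(\<Sum>j\<in>A. if P then g j else 0) = (if P then (\<Sum>j\<in>A. g j) else (0::'a::comm_monoid_add))"
  by simp

lemma sum2_delta: "k < (n::nat) \<Longrightarrow> (\<Sum>i<n. \<Sum>l<n. if i = k \<and> l = k then g i l else 0) = (g k k :: 'a::comm_monoid_add)"
proof -
  assume k: "k < n"
  have "(\<Sum>i<n. \<Sum>l<n. if i = k \<and> l = k then g i l else 0) = (\<Sum>i<n. if i = k then (\<Sum>l<n. if l = k then g i l else 0) else 0)"
    by (intro sum.cong) auto
  also have "\<dots> = g k k" using k by simp
  finally show ?thesis .
qed

lemma qf_pert:
  assumes k: "k < n" and h: "hermf n f"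
  shows "qf n f (\<lambda>i. v i + (if i = k then t else 0)) =
     qf n f v + cnj t * (\<Sum>j<n. f k j * v j) + t * cnj (\<Sum>j<n. f k j * v j) + cnj t * t * f k k"
proof -
  have e: "cnj (v i + (if i = k then t else 0)) * f i j * (v j + (if j = k then t else 0))
     = cnj (v i) * f i j * v j + (if j = k then cnj (v i) * f i j * t else 0)
       + (if i = k then cnj t * f i j * v j else 0)
       + (if i = k \<and> j = k then cnj t * f i j * t else 0)" for i j
    by (cases "i = k"; cases "j = k"; simp add: algebra_simps)
  have s2: "(\<Sum>i<n. \<Sum>j<n. (if j = k then cnj (v i) * f i j * t else 0)) = t * cnj (\<Sum>j<n. f k j * v j)"
  proof -
    have "(\<Sum>i<n. \<Sum>j<n. (if j = k then cnj (v i) * f i j * t else 0)) = (\<Sum>i<n. cnj (v i) * f i k * t)"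
      using k by simp
    also have "\<dots> = (\<Sum>i<n. t * cnj (f k i * v i))"
    proof (rule sum.cong[OF refl])
      fix i assume "i \<in> {..<n}"
      then have "f i k = cnj (f k i)" using h k unfolding hermf_def by blast
      then show "cnj (v i) * f i k * t = t * cnj (f k i * v i)" by (simp add: algebra_simps)
    qed
    also have "\<dots> = t * cnj (\<Sum>j<n. f k j * v j)"
      by (simp add: sum_distrib_left)
    finally show ?thesis .
  qed
  have s3: "(\<Sum>i<n. \<Sum>j<n. (if i = k then cnj t * f i j * v j else 0)) = cnj t * (\<Sum>j<n. f k j * v j)"
    using k by (simp only: sum_if_const sum.delta' finite_lessThan) (simp add: sum_distrib_left mult.assoc)
  have s4: "(\<Sum>i<n. \<Sum>j<n. (if i = k \<and> j = k then cnj t * f i j * t else 0)) = cnj t * t * f k k"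
  proof -
    have "(\<Sum>i<n. \<Sum>j<n. (if i = k \<and> j = k then cnj t * f i j * t else 0)) = (\<Sum>i<n. if i = k then (\<Sum>j<n. if j = k then cnj t * f i j * t else 0) else 0)"
      by (intro sum.cong) auto
    also have "\<dots> = cnj t * t * f k k" using k by simp
    finally show ?thesis .
  qed
  show ?thesis unfolding qf_def e sum.distrib s2 s3 s4 by simp
qed

lemma qf_zero[simp]: "qf n f (\<lambda>i. 0) = 0"
  by (simp add: qf_def)

lemma diag_nonneg:
  assumes k: "k < n" and h: "hermf n f" and p: "\<forall>v. 0 \<le> Re (qf n f v)"
  shows "0 \<le> Re (f k k)" "f k k = complex_of_real (Re (f k k))"
proof -
  have "qf n f (\<lambda>i. 0 + (if i = k then 1 else 0)) = f k k"
    using qf_pert[OF k h, of "\<lambda>i. 0" 1] by simp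
  with p show "0 \<le> Re (f k k)" by metis
  from h k have "f k k = cnj (f k k)" unfolding hermf_def by blast
  then show "f k k = complex_of_real (Re (f k k))"
    by (metis Reals_cnj_iff complex_is_Real_iff of_real_Re)
qed

lemma qv_l: assumes j: "j < n" shows "qf n f (\<lambda>i. if i = j then 1 else 0) = f j j"
proof -
  have "qf n f (\<lambda>i. if i = j then 1 else 0) = (\<Sum>i<n. \<Sum>l<n. if i = j \<and> l = j then f i l else 0)"
    unfolding qf_def by (rule sum.cong[OF refl], rule sum.cong[OF refl]) auto
  also have "\<dots> = f j j" using j by (rule sum2_delta)
  finally show ?thesis .
qed

lemma sv_l: assumes j: "j < (n::nat)" shows "(\<Sum>l<n. f k l * (if l = j then 1 else 0)) = (f k j :: complex)"
proof -
  have "(\<Sum>l<n. f k l * (if l = j then 1 else 0)) = (\<Sum>l<n. if l = j then f k l else 0)"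
    by (rule sum.cong[OF refl]) auto
  also have "\<dots> = f k j" using j by simp
  finally show ?thesis .
qed

lemma zero_diag_row:
  assumes k: "k < n" and j: "j < n" and h: "hermf n f" and p: "\<forall>v. 0 \<le> Re (qf n f v)"
    and z: "f k k = 0"
  shows "f k j = 0"
proof (rule ccontr)
  assume nz: "f k j \<noteq> 0"
  define c where "c = f k j"
  define x where "x = (Re (f j j) + 1) / (2 * (cmod c)^2)"
  define v where "v = (\<lambda>i. if i = j then (1::complex) else 0)"
  define t where "t = - complex_of_real x * c"
  have qv: "qf n f v = f j j" unfolding v_def by (rule qv_l[OF j])
  have sv: "(\<Sum>l<n. f k l * v l) = c" unfolding v_def c_def by (rule sv_l[OF j])
  have eq: "qf n f (\<lambda>i. v i + (if i = k then t else 0)) = f j j + (cnj t * c + t * cnj c)"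
    unfolding qf_pert[OF k h, of v t] qv sv z by simp
  have re1: "Re (cnj t * c + t * cnj c) = - 2 * x * (cmod c)^2"
  proof -
    have cc: "c * cnj c = complex_of_real ((cmod c)^2)"
      using complex_norm_square[of c] by simp
    have "cnj t * c + t * cnj c = - 2 * complex_of_real x * (c * cnj c)"
      unfolding t_def by (simp add: algebra_simps)
    also have "\<dots> = complex_of_real (- 2 * x * (cmod c)^2)" unfolding cc by simp
    finally show ?thesis by simp
  qed
  have cnz: "cmod c \<noteq> 0" using nz c_def by simp
  have re2: "2 * x * (cmod c)^2 = Re (f j j) + 1"
    unfolding x_def using cnz by (simp add: field_simps)
  have re3: "Re (qf n f (\<lambda>i. v i + (if i = k then t else 0))) = Re (f j j) + Re (cnj t * c + t * cnj c)"
    unfolding eq by (simp only: plus_complex.sel)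
  have "0 \<le> Re (qf n f (\<lambda>i. v i + (if i = k then t else 0)))" using p by blast
  with re1 re2 re3 show False by linarith
qed

lemma chol_step:
  fixes d :: nat
  shows "\<forall>f. hermf n f \<longrightarrow> (\<forall>v. 0 \<le> Re (qf n f v)) \<longrightarrow>
    (\<forall>i<n. \<forall>j<n. (i < n - d \<or> j < n - d) \<longrightarrow> f i j = 0) \<longrightarrow>
    (\<exists>(m::nat) g. m \<ge> 1 \<and> (\<forall>i<n. \<forall>j<n. f i j = (\<Sum>l<m. cnj (g l i) * g l j)))"
proof (induction d)
  case 0
  show ?case
    by (intro allI impI exI[of _ 1] exI[of _ "\<lambda>_ _. 0"]) auto
next
  case (Suc d)
  show ?case
  proof (intro allI impI)
    fix f assume h: "hermf n f" and p: "\<forall>v. 0 \<le> Re (qf n f v)"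
      and z: "\<forall>i<n. \<forall>j<n. (i < n - Suc d \<or> j < n - Suc d) \<longrightarrow> f i j = 0"
    show "\<exists>(m::nat) g. m \<ge> 1 \<and> (\<forall>i<n. \<forall>j<n. f i j = (\<Sum>l<m. cnj (g l i) * g l j))"
    proof (cases "n \<le> d")
      case True
      then have "n - Suc d = n - d" by simp
      from z have "\<forall>i<n. \<forall>j<n. (i < n - d \<or> j < n - d) \<longrightarrow> f i j = 0" unfolding \<open>n - Suc d = n - d\<close> .
      then show ?thesis by (rule Suc.IH[THEN spec[of _ f], THEN mp, THEN mp, THEN mp, OF h p])
    next
      case False
      define k where "k = n - Suc d"
      have k: "k < n" and k1: "Suc k = n - d" using False unfolding k_def by auto
      have a0: "0 \<le> Re (f k k)" and ar: "f k k = complex_of_real (Re (f k k))"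
        using diag_nonneg[OF k h p] by auto
      show ?thesis
      proof (cases "Re (f k k) = 0")
        case True
        then have fkk: "f k k = 0" using ar by simp
        have row: "f k j = 0" if "j < n" for j using zero_diag_row[OF k that h p fkk] .
        have col: "f j k = 0" if "j < n" for j
        proof -
          from h that k have "f j k = cnj (f k j)" unfolding hermf_def by blast
          with row[OF that] show ?thesis by simp
        qed
        have z': "\<forall>i<n. \<forall>j<n. (i < n - d \<or> j < n - d) \<longrightarrow> f i j = 0"
        proof (intro allI impI)
          fix i j assume "i < n" "j < n" "i < n - d \<or> j < n - d"
          then have "i = k \<or> j = k \<or> i < k \<or> j < k" using k1 by linarith
          moreover have "i < k \<or> j < k \<Longrightarrow> f i j = 0" using z \<open>i < n\<close> \<open>j < n\<close> unfolding k_def by blast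
          ultimately show "f i j = 0" using row col \<open>i < n\<close> \<open>j < n\<close> by blast
        qed
        show ?thesis by (rule Suc.IH[THEN spec[of _ f], THEN mp, THEN mp, THEN mp, OF h p z'])
      next
        case False
        define a where "a = Re (f k k)"
        have apos: "a > 0" using a0 False a_def by simp
        define sa where "sa = sqrt a"
        have sapos: "sa > 0" using apos sa_def by simp
        have sasq: "sa * sa = a" using apos sa_def by simp
        have fkk: "f k k = complex_of_real a" using ar a_def by simp
        define r where "r = (\<lambda>j. f k j / complex_of_real sa)"
        define f' where "f' = (\<lambda>i j. f i j - cnj (r i) * r j)"
        have h': "hermf n f'" unfolding hermf_def
        proof (intro allI impI)
          fix i j assume "i < n" "j < n"
          with h have "f j i = cnj (f i j)" unfolding hermf_def by blast
          then show "f' j i = cnj (f' i j)" unfolding f'_def by simp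
        qed
        have sa0: "complex_of_real sa \<noteq> 0" using sapos by simp
        have a0': "complex_of_real a \<noteq> 0" using apos by simp
        have sasqc: "complex_of_real sa * complex_of_real sa = complex_of_real a"
          using sasq by (metis of_real_mult)
        have rowk: "f' k j = 0" if "j < n" for j
        proof -
          have "cnj (r k) * r j = complex_of_real a / (complex_of_real sa * complex_of_real sa) * f k j"
            by (simp add: r_def fkk field_simps)
          also have "\<dots> = f k j" unfolding sasqc using a0' by simp
          finally show ?thesis unfolding f'_def by simp
        qed
        have rowlt: "f' i j = 0" if "i < k" "j < n" for i j
        proof -
          have "f i j = 0" using z that k unfolding k_def by simp
          moreover have "f k i = 0" using z that k unfolding k_def by simp
          ultimately show ?thesis unfolding f'_def r_def by simp
        qed
        have rowle: "f' i j = 0" if "i \<le> k" "j < n" for i j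
          using rowk rowlt that by (cases "i = k") auto
        have z': "\<forall>i<n. \<forall>j<n. (i < n - d \<or> j < n - d) \<longrightarrow> f' i j = 0"
        proof (intro allI impI)
          fix i j assume ij: "i < n" "j < n" "i < n - d \<or> j < n - d"
          then have "i \<le> k \<or> j \<le> k" using k1 by linarith
          moreover have "f' i j = cnj (f' j i)" using h' ij unfolding hermf_def by blast
          ultimately show "f' i j = 0" using rowle ij by auto
        qed
        have p': "\<forall>v. 0 \<le> Re (qf n f' v)"
        proof
          fix v
          define s where "s = (\<Sum>j<n. f k j * v j)"
          define t where "t = - s / complex_of_real a"
          define \<rho> where "\<rho> = (\<Sum>j<n. r j * v j)"
          have c1: "qf n f' v = qf n f v - cnj \<rho> * \<rho>"
          proof -
            have "qf n f' v = (\<Sum>i<n. \<Sum>j<n. cnj (v i) * f i j * v j - cnj (r i * v i) * (r j * v j))"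
              unfolding qf_def f'_def by (simp add: algebra_simps)
            also have "\<dots> = qf n f v - (\<Sum>i<n. \<Sum>j<n. cnj (r i * v i) * (r j * v j))"
              unfolding qf_def by (simp add: sum_subtractf)
            also have "(\<Sum>i<n. \<Sum>j<n. cnj (r i * v i) * (r j * v j)) = cnj \<rho> * \<rho>"
              unfolding \<rho>_def cnj_sum sum_product ..
            finally show ?thesis .
          qed
          have c2: "\<rho> = s / complex_of_real sa"
            unfolding \<rho>_def s_def r_def by (simp add: sum_divide_distrib)
          have c3: "qf n f (\<lambda>i. v i + (if i = k then t else 0)) = qf n f v - cnj s * s / complex_of_real a"
          proof -
            have "qf n f (\<lambda>i. v i + (if i = k then t else 0)) = qf n f v + cnj t * s + t * cnj s + cnj t * t * complex_of_real a"
              using qf_pert[OF k h, of v t] unfolding s_def fkk .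
            also have "\<dots> = qf n f v - cnj s * s / complex_of_real a"
              unfolding t_def using a0' by (simp add: field_simps)
            finally show ?thesis .
          qed
          have c4: "cnj \<rho> * \<rho> = cnj s * s / complex_of_real a"
            unfolding c2 sasqc[symmetric] by (simp add: field_simps)
          have "qf n f' v = qf n f (\<lambda>i. v i + (if i = k then t else 0))"
            unfolding c1 c3 c4 ..
          then show "0 \<le> Re (qf n f' v)" using p by simp
        qed
        obtain m :: nat and g where m: "m \<ge> 1" and g: "\<forall>i<n. \<forall>j<n. f' i j = (\<Sum>l<m. cnj (g l i) * g l j)"
          using Suc.IH[THEN spec[of _ f'], THEN mp, THEN mp, THEN mp, OF h' p' z'] by blast
        define g' where "g' = (\<lambda>l. if l = 0 then r else g (l - 1))"
        have fg: "\<forall>i<n. \<forall>j<n. f i j = (\<Sum>l<Suc m. cnj (g' l i) * g' l j)"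
        proof (intro allI impI)
          fix i j assume "i < n" "j < n"
          then have "f i j = f' i j + cnj (r i) * r j" unfolding f'_def by simp
          also have "\<dots> = (\<Sum>l<m. cnj (g l i) * g l j) + cnj (r i) * r j" using g \<open>i < n\<close> \<open>j < n\<close> by simp
          also have "\<dots> = (\<Sum>l<Suc m. cnj (g' l i) * g' l j)"
            unfolding sum.lessThan_Suc_shift g'_def by simp
          finally show "f i j = (\<Sum>l<Suc m. cnj (g' l i) * g' l j)" .
        qed
        show ?thesis
        proof (intro exI[of _ "Suc m"] exI[of _ g'] conjI)
          show "1 \<le> Suc m" by simp
          show "\<forall>i<n. \<forall>j<n. f i j = (\<Sum>l<Suc m. cnj (g' l i) * g' l j)" by (rule fg)
        qed
      qed
    qed
  qed
qed

lemma adj_carrier[simp]: "X \<in> carrier_mat r c \<Longrightarrow> adj_mat X \<in> carrier_mat c r"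
  unfolding adj_mat_def by simp

lemma adj_index: "X \<in> carrier_mat r c \<Longrightarrow> i < c \<Longrightarrow> j < r \<Longrightarrow> adj_mat X $$ (i, j) = cnj (X $$ (j, i))"
  unfolding adj_mat_def by simp

lemma backward:
  fixes R Om :: "complex mat"
  assumes R: "R \<in> carrier_mat n n" and RR: "R * transpose_mat R = 1\<^sub>m n"
    and O: "Om \<in> carrier_mat m n" and OO: "Om * transpose_mat Om = 0\<^sub>m m m"
  shows "(adj_mat R * adj_mat Om * Om * R) * transpose_mat (adj_mat R * adj_mat Om * Om * R) = 0\<^sub>m n n"
proof -
  define P where "P = adj_mat R * adj_mat Om"
  have P: "P \<in> carrier_mat n m" unfolding P_def by (rule mult_carrier_mat[OF adj_carrier[OF R] adj_carrier[OF O]])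
  have PO: "P * Om \<in> carrier_mat n n" by (rule mult_carrier_mat[OF P O])
  have RT: "transpose_mat R \<in> carrier_mat n n" using R by simp
  have OT: "transpose_mat Om \<in> carrier_mat n m" using O by simp
  have PT: "transpose_mat P \<in> carrier_mat m n" using P by simp
  have OTPT: "transpose_mat Om * transpose_mat P \<in> carrier_mat n n" by (rule mult_carrier_mat[OF OT PT])
  have tr: "transpose_mat (P * Om * R) = transpose_mat R * (transpose_mat Om * transpose_mat P)"
    using transpose_mult[OF PO R] transpose_mult[OF P O] by simp
  have "(P * Om * R) * transpose_mat (P * Om * R) = (P * Om) * (R * (transpose_mat R * (transpose_mat Om * transpose_mat P)))"
    unfolding tr by (rule assoc_mult_mat[OF PO R mult_carrier_mat[OF RT OTPT]])
  also have "R * (transpose_mat R * (transpose_mat Om * transpose_mat P)) = (R * transpose_mat R) * (transpose_mat Om * transpose_mat P)"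
    by (rule assoc_mult_mat[OF R RT OTPT, symmetric])
  also have "\<dots> = transpose_mat Om * transpose_mat P" unfolding RR using OTPT by (rule left_mult_one_mat)
  also have "(P * Om) * (transpose_mat Om * transpose_mat P) = P * (Om * (transpose_mat Om * transpose_mat P))"
    by (rule assoc_mult_mat[OF P O OTPT])
  also have "Om * (transpose_mat Om * transpose_mat P) = (Om * transpose_mat Om) * transpose_mat P"
    by (rule assoc_mult_mat[OF O OT PT, symmetric])
  also have "\<dots> = 0\<^sub>m m n" unfolding OO using PT by (rule left_mult_zero_mat)
  also have "P * 0\<^sub>m m n = 0\<^sub>m n n" using P by (rule right_mult_zero_mat)
  finally show ?thesis unfolding P_def .
qed

lemma sum4_swap:
  "(\<Sum>a\<in>A. \<Sum>b\<in>B. \<Sum>j\<in>C. \<Sum>k\<in>D. F a b j k) = (\<Sum>j\<in>C. \<Sum>k\<in>D. \<Sum>a\<in>A. \<Sum>b\<in>B. F a b j k)"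
proof -
  have "(\<Sum>a\<in>A. \<Sum>b\<in>B. \<Sum>j\<in>C. \<Sum>k\<in>D. F a b j k) = (\<Sum>a\<in>A. \<Sum>j\<in>C. \<Sum>b\<in>B. \<Sum>k\<in>D. F a b j k)"
    by (rule sum.cong[OF refl], rule sum.swap)
  also have "\<dots> = (\<Sum>a\<in>A. \<Sum>j\<in>C. \<Sum>k\<in>D. \<Sum>b\<in>B. F a b j k)"
    by (rule sum.cong[OF refl], rule sum.cong[OF refl], rule sum.swap)
  also have "\<dots> = (\<Sum>j\<in>C. \<Sum>a\<in>A. \<Sum>k\<in>D. \<Sum>b\<in>B. F a b j k)"
    by (rule sum.swap)
  also have "\<dots> = (\<Sum>j\<in>C. \<Sum>k\<in>D. \<Sum>a\<in>A. \<Sum>b\<in>B. F a b j k)"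
    by (rule sum.cong[OF refl], rule sum.swap)
  finally show ?thesis .
qed

lemma iso_zero:
  fixes g :: "nat \<Rightarrow> nat \<Rightarrow> complex" and f :: "nat \<Rightarrow> nat \<Rightarrow> complex"
  assumes fg: "\<And>i j. i < n \<Longrightarrow> j < n \<Longrightarrow> f i j = (\<Sum>l<m. cnj (g l i) * g l j)"
    and h: "hermf n f"
    and iso: "\<And>i. i < n \<Longrightarrow> (\<Sum>j<n. f i j * f i j) = 0"
    and a: "a < m" and b: "b < m"
  shows "(\<Sum>j<n. g a j * g b j) = 0"
proof -
  define M where "M = (\<lambda>a b. \<Sum>j<n. g a j * g b j)"
  have e1: "M a b * cnj (M a b) = (\<Sum>j<n. \<Sum>k<n. (cnj (g a k) * g a j) * (g b j * cnj (g b k)))" for a b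
  proof -
    have "M a b * cnj (M a b) = (\<Sum>j<n. g a j * g b j) * (\<Sum>k<n. cnj (g a k) * cnj (g b k))"
      unfolding M_def cnj_sum complex_cnj_mult ..
    also have "\<dots> = (\<Sum>j<n. \<Sum>k<n. (g a j * g b j) * (cnj (g a k) * cnj (g b k)))"
      by (rule sum_product)
    also have "\<dots> = (\<Sum>j<n. \<Sum>k<n. (cnj (g a k) * g a j) * (g b j * cnj (g b k)))"
      by (rule sum.cong[OF refl], rule sum.cong[OF refl]) (simp only: ac_simps)
    finally show ?thesis .
  qed
  have e2: "(\<Sum>a<m. \<Sum>b<m. (cnj (g a k) * g a j) * (g b j * cnj (g b k))) = f k j * f k j"
    if j: "j < n" and k: "k < n" for j k
  proof -
    have "(\<Sum>a<m. \<Sum>b<m. (cnj (g a k) * g a j) * (g b j * cnj (g b k))) =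
        (\<Sum>a<m. cnj (g a k) * g a j) * (\<Sum>b<m. g b j * cnj (g b k))"
      by (rule sum_product[symmetric])
    also have "(\<Sum>a<m. cnj (g a k) * g a j) = f k j" by (rule fg[OF k j, symmetric])
    also have "(\<Sum>b<m. g b j * cnj (g b k)) = cnj (f j k)"
      unfolding fg[OF j k] cnj_sum complex_cnj_mult complex_cnj_cnj ..
    also have "cnj (f j k) = f k j"
    proof -
      have "f k j = cnj (f j k)" using h j k unfolding hermf_def by blast
      then show ?thesis by (rule sym)
    qed
    finally show ?thesis .
  qed
  have "(\<Sum>a<m. \<Sum>b<m. M a b * cnj (M a b)) = (\<Sum>a<m. \<Sum>b<m. \<Sum>j<n. \<Sum>k<n. (cnj (g a k) * g a j) * (g b j * cnj (g b k)))"
    unfolding e1 ..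
  also have "\<dots> = (\<Sum>j<n. \<Sum>k<n. \<Sum>a<m. \<Sum>b<m. (cnj (g a k) * g a j) * (g b j * cnj (g b k)))"
    by (rule sum4_swap)
  also have "\<dots> = (\<Sum>j<n. \<Sum>k<n. f k j * f k j)"
    by (rule sum.cong[OF refl], rule sum.cong[OF refl]) (simp add: e2)
  also have "\<dots> = (\<Sum>k<n. \<Sum>j<n. f k j * f k j)" by (rule sum.swap)
  also have "\<dots> = 0" using iso by simp
  finally have s0: "(\<Sum>a<m. \<Sum>b<m. M a b * cnj (M a b)) = 0" .
  have nsq: "M a b * cnj (M a b) = complex_of_real ((cmod (M a b))^2)" for a b
    by (rule complex_norm_square[symmetric])
  have "(\<Sum>a<m. \<Sum>b<m. M a b * cnj (M a b)) = (\<Sum>a<m. \<Sum>b<m. complex_of_real ((cmod (M a b))^2))"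
    unfolding nsq ..
  also have "\<dots> = complex_of_real (\<Sum>a<m. \<Sum>b<m. (cmod (M a b))^2)"
    by (simp only: of_real_sum)
  finally have "complex_of_real (\<Sum>a<m. \<Sum>b<m. (cmod (M a b))^2) = 0" using s0 by simp
  then have r0: "(\<Sum>a<m. \<Sum>b<m. (cmod (M a b))^2) = 0" by (simp only: of_real_eq_0_iff)
  have A: "(\<Sum>a<m. \<Sum>b<m. (cmod (M a b))^2) = 0 \<longleftrightarrow> (\<forall>a\<in>{..<m}. (\<Sum>b<m. (cmod (M a b))^2) = 0)"
    by (rule sum_nonneg_eq_0_iff) (auto intro: sum_nonneg)
  have "(\<Sum>b<m. (cmod (M a b))^2) = 0" using A r0 a by blast
  moreover have B: "(\<Sum>b<m. (cmod (M a b))^2) = 0 \<longleftrightarrow> (\<forall>b\<in>{..<m}. (cmod (M a b))^2 = 0)"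
    by (rule sum_nonneg_eq_0_iff) auto
  ultimately have "(cmod (M a b))^2 = 0" using b by blast
  then show ?thesis unfolding M_def by simp
qed

lemma adj_dims[simp]: "dim_row (adj_mat X) = dim_col X" "dim_col (adj_mat X) = dim_row X"
  unfolding adj_mat_def by simp_all

lemma adj_one: "adj_mat (1\<^sub>m n) = 1\<^sub>m n"
  by (rule eq_matI) (auto simp: adj_mat_def)

theorem theorem2:
  fixes n :: nat and H0 :: "complex mat"
  assumes "H0 \<in> carrier_mat n n"
    and "hermitian_mat H0"
    and "psd_mat n H0"
  shows "H0 * transpose_mat H0 = 0\<^sub>m n n \<longleftrightarrow>
    (\<exists>(R :: complex mat) (m :: nat) (Om :: complex mat).
        R \<in> carrier_mat n n \<and> R * transpose_mat R = 1\<^sub>m n \<and> transpose_mat R * R = 1\<^sub>m n \<and>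
        m \<ge> 1 \<and> Om \<in> carrier_mat m n \<and> Om * transpose_mat Om = 0\<^sub>m m m \<and>
        H0 = adj_mat R * adj_mat Om * Om * R)"
proof
  assume "\<exists>(R :: complex mat) (m :: nat) (Om :: complex mat).
        R \<in> carrier_mat n n \<and> R * transpose_mat R = 1\<^sub>m n \<and> transpose_mat R * R = 1\<^sub>m n \<and>
        m \<ge> 1 \<and> Om \<in> carrier_mat m n \<and> Om * transpose_mat Om = 0\<^sub>m m m \<and>
        H0 = adj_mat R * adj_mat Om * Om * R"
  then obtain R m Om where R: "R \<in> carrier_mat n n" and RR: "R * transpose_mat R = 1\<^sub>m n"
    and O: "Om \<in> carrier_mat m n" and OO: "Om * transpose_mat Om = 0\<^sub>m m m"
    and H: "H0 = adj_mat R * adj_mat Om * Om * R" by blast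
  show "H0 * transpose_mat H0 = 0\<^sub>m n n" unfolding H by (rule backward[OF R RR O OO])
next
  assume iso: "H0 * transpose_mat H0 = 0\<^sub>m n n"
  have H0: "H0 \<in> carrier_mat n n" by fact
  have dr: "dim_row H0 = n" and dc: "dim_col H0 = n" using H0 by auto
  define f where "f = (\<lambda>i j. H0 $$ (i, j))"
  have h: "hermf n f" unfolding hermf_def
  proof (intro allI impI)
    fix i j assume i: "i < n" and j: "j < n"
    have "adj_mat H0 = H0" using assms(2) unfolding hermitian_mat_def .
    then have "H0 $$ (j, i) = adj_mat H0 $$ (j, i)" by simp
    also have "\<dots> = cnj (H0 $$ (i, j))" by (rule adj_index[OF H0 j i])
    finally show "f j i = cnj (f i j)" unfolding f_def .
  qed
  have p: "\<forall>v. 0 \<le> Re (qf n f v)"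
  proof
    fix v :: "nat \<Rightarrow> complex"
    define w where "w = vec n v"
    have w: "w \<in> carrier_vec n" unfolding w_def by simp
    have mv: "(H0 *\<^sub>v w) $ i = (\<Sum>l<n. f i l * v l)" if i: "i < n" for i
    proof -
      have "(H0 *\<^sub>v w) $ i = row H0 i \<bullet> w" using i dr by simp
      also have "\<dots> = (\<Sum>l\<in>{0..<n}. row H0 i $ l * w $ l)" unfolding scalar_prod_def w_def by simp
      also have "\<dots> = (\<Sum>l<n. f i l * v l)" unfolding atLeast0LessThan
        by (rule sum.cong[OF refl]) (use i dr dc in \<open>simp add: f_def w_def\<close>)
      finally show ?thesis .
    qed
    have q: "(\<Sum>i<n. cnj (w $ i) * (H0 *\<^sub>v w) $ i) = qf n f v"
      unfolding qf_def
    proof (rule sum.cong[OF refl])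
      fix i assume "i \<in> {..<n}"
      then have i: "i < n" by simp
      have "cnj (w $ i) * (H0 *\<^sub>v w) $ i = cnj (v i) * (\<Sum>l<n. f i l * v l)"
        unfolding mv[OF i] using i by (simp add: w_def)
      also have "\<dots> = (\<Sum>j<n. cnj (v i) * f i j * v j)" by (simp add: sum_distrib_left mult.assoc)
      finally show "cnj (w $ i) * (H0 *\<^sub>v w) $ i = (\<Sum>j<n. cnj (v i) * f i j * v j)" .
    qed
    from assms(3) w have "let q = (\<Sum>i<n. cnj (w $ i) * (H0 *\<^sub>v w) $ i) in q \<in> \<real> \<and> 0 \<le> Re q"
      unfolding psd_mat_def by blast
    then show "0 \<le> Re (qf n f v)" unfolding q Let_def by blast
  qed
  have z0: "\<forall>i<n. \<forall>j<n. (i < n - n \<or> j < n - n) \<longrightarrow> f i j = 0" by simp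
  obtain m :: nat and g where m: "m \<ge> 1" and fg0: "\<forall>i<n. \<forall>j<n. f i j = (\<Sum>l<m. cnj (g l i) * g l j)"
    using chol_step[of n n, THEN spec[of _ f], THEN mp, THEN mp, THEN mp, OF h p z0] by blast
  have fg: "f i j = (\<Sum>l<m. cnj (g l i) * g l j)" if "i < n" "j < n" for i j
    using fg0 that by blast
  have isod: "(\<Sum>j<n. f i j * f i j) = 0" if i: "i < n" for i
  proof -
    have "(H0 * transpose_mat H0) $$ (i, i) = row H0 i \<bullet> col (transpose_mat H0) i"
      using i dr dc by simp
    also have "\<dots> = (\<Sum>j\<in>{0..<n}. row H0 i $ j * col (transpose_mat H0) i $ j)"
      unfolding scalar_prod_def using dc by simp
    also have "\<dots> = (\<Sum>j<n. f i j * f i j)" unfolding atLeast0LessThan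
      by (rule sum.cong[OF refl]) (use i dr dc in \<open>simp add: f_def\<close>)
    finally have "(\<Sum>j<n. f i j * f i j) = (H0 * transpose_mat H0) $$ (i, i)" by simp
    also have "\<dots> = 0" unfolding iso using i by simp
    finally show ?thesis .
  qed
  define Om where "Om = mat m n (\<lambda>(l, j). g l j)"
  have O: "Om \<in> carrier_mat m n" unfolding Om_def by simp
  have OO: "Om * transpose_mat Om = 0\<^sub>m m m"
  proof (rule eq_matI)
    fix a b assume a: "a < dim_row (0\<^sub>m m m :: complex mat)" and b: "b < dim_col (0\<^sub>m m m :: complex mat)"
    then have a: "a < m" and b: "b < m" by auto
    have "(Om * transpose_mat Om) $$ (a, b) = row Om a \<bullet> col (transpose_mat Om) b"
      using a b O by simp
    also have "\<dots> = (\<Sum>j\<in>{0..<n}. row Om a $ j * col (transpose_mat Om) b $ j)"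
      unfolding scalar_prod_def using O by simp
    also have "\<dots> = (\<Sum>j<n. g a j * g b j)" unfolding atLeast0LessThan
      by (rule sum.cong[OF refl]) (use a b in \<open>simp add: Om_def\<close>)
    also have "\<dots> = 0" by (rule iso_zero[OF fg h isod a b])
    finally show "(Om * transpose_mat Om) $$ (a, b) = 0\<^sub>m m m $$ (a, b)" using a b by simp
  qed (use O in auto)
  have HO: "H0 = adj_mat Om * Om"
  proof (rule eq_matI)
    fix i j assume i: "i < dim_row (adj_mat Om * Om)" and j: "j < dim_col (adj_mat Om * Om)"
    have AO: "adj_mat Om \<in> carrier_mat n m" using O by simp
    from i j AO O have i: "i < n" and j: "j < n" by auto
    have "(adj_mat Om * Om) $$ (i, j) = row (adj_mat Om) i \<bullet> col Om j"
      by (rule index_mult_mat(1)) (use AO O i j in auto)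
    also have "\<dots> = (\<Sum>l\<in>{0..<m}. row (adj_mat Om) i $ l * col Om j $ l)"
      unfolding scalar_prod_def using O by simp
    also have "\<dots> = (\<Sum>l<m. cnj (g l i) * g l j)" unfolding atLeast0LessThan
    proof (rule sum.cong[OF refl])
      fix l assume "l \<in> {..<m}"
      then have l: "l < m" by simp
      have dO: "dim_row Om = m" "dim_col Om = n" using O by auto
      have "row (adj_mat Om) i $ l = adj_mat Om $$ (i, l)" using dO i l by simp
      also have "\<dots> = cnj (Om $$ (l, i))" by (rule adj_index[OF O i l])
      finally show "row (adj_mat Om) i $ l * col Om j $ l = cnj (g l i) * g l j"
        using O l i j by (simp add: Om_def)
    qed
    also have "\<dots> = f i j" by (rule fg[OF i j, symmetric])
    finally show "H0 $$ (i, j) = (adj_mat Om * Om) $$ (i, j)" unfolding f_def by simp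
  qed (use O H0 in auto)
  show "\<exists>(R :: complex mat) (m :: nat) (Om :: complex mat).
        R \<in> carrier_mat n n \<and> R * transpose_mat R = 1\<^sub>m n \<and> transpose_mat R * R = 1\<^sub>m n \<and>
        m \<ge> 1 \<and> Om \<in> carrier_mat m n \<and> Om * transpose_mat Om = 0\<^sub>m m m \<and>
        H0 = adj_mat R * adj_mat Om * Om * R"
  proof (intro exI conjI)
    show "1\<^sub>m n \<in> carrier_mat n n" by simp
    show "1\<^sub>m n * transpose_mat (1\<^sub>m n) = (1\<^sub>m n :: complex mat)" by simp
    show "transpose_mat (1\<^sub>m n) * 1\<^sub>m n = (1\<^sub>m n :: complex mat)" by simp
    show "1 \<le> m" by fact
    show "Om \<in> carrier_mat m n" by fact
    show "Om * transpose_mat Om = 0\<^sub>m m m" by fact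
    have AO: "adj_mat Om \<in> carrier_mat n m" using O by simp
    have "adj_mat (1\<^sub>m n) * adj_mat Om * Om * 1\<^sub>m n = adj_mat Om * Om"
      unfolding adj_one using AO O by simp
    then show "H0 = adj_mat (1\<^sub>m n) * adj_mat Om * Om * 1\<^sub>m n" using HO by simp
  qed
qed

end
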